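(* Let $m>1$, $\chi>0$, and let $p\ge2$ be an integer. The maximum $$\frac1{C_p}:=\max_{X\in\mathcal R^p}\frac{\sum_{1\le i\ne j\le p}|X_j-X_i|^{1-m}}{\sum_{i=1}^{p-1}(X_{i+1}-X_i)^{1-m}}$$ is attained and satisfies $\frac1{C_p}\le p$. Moreover, if $\alpha\ge0$, then $\mathcal F^p_{m,\alpha}$ is bounded below on $\mathcal R^p$ if and only if $\chi\le C_p$.
   Context: $\mathcal R^p=\{X\in\mathbb R^p: X_1<\dots<X_p,\ \sum_iX_i=0\}$. For $\alpha\in\mathbb R$, $\mathcal F^p_{m,\alpha}(X)=\frac1{m-1}\sum_{i=1}^{p-1}(X_{i+1}-X_i)^{1-m}-\frac{\chi}{m-1}\sum_{1\le i\ne j\le p}|X_i-X_j|^{1-m}+\alpha\frac{|X|^2}{2}$, with $|\cdot|$ the Euclidean norm. *)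

theory Defs
  imports Complex_Main
begin

text \<open>Points X of R^p are represented as functions nat => real, coordinates X 1, ..., X p
  (values at other indices are irrelevant).\<close>

definition Rp :: "nat \<Rightarrow> (nat \<Rightarrow> real) set" where
  "Rp p = {X. (\<forall>i\<in>{1..<p}. X i < X (i+1)) \<and> (\<Sum>i=1..p. X i) = 0}"

definition adj_sum :: "real \<Rightarrow> nat \<Rightarrow> (nat \<Rightarrow> real) \<Rightarrow> real" where
  "adj_sum m p X = (\<Sum>i=1..<p. (X (i+1) - X i) powr (1 - m))"

definition pair_sum :: "real \<Rightarrow> nat \<Rightarrow> (nat \<Rightarrow> real) \<Rightarrow> real" where
  "pair_sum m p X = (\<Sum>i\<in>{1..p}. \<Sum>j\<in>{1..p} - {i}. \<bar>X j - X i\<bar> powr (1 - m))"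

definition ratio :: "real \<Rightarrow> nat \<Rightarrow> (nat \<Rightarrow> real) \<Rightarrow> real" where
  "ratio m p X = pair_sum m p X / adj_sum m p X"

definition Cp :: "real \<Rightarrow> nat \<Rightarrow> real" where
  "Cp m p = 1 / (SUP X\<in>Rp p. ratio m p X)"

definition Fp :: "real \<Rightarrow> real \<Rightarrow> real \<Rightarrow> nat \<Rightarrow> (nat \<Rightarrow> real) \<Rightarrow> real" where
  "Fp m \<chi> \<alpha> p X = adj_sum m p X / (m - 1) - \<chi> / (m - 1) * pair_sum m p X
      + \<alpha> * (\<Sum>i=1..p. (X i)^2) / 2"

end

theory Submission
  imports Defs "HOL-Analysis.Function_Topology"
begin


definition posg :: "(nat\<Rightarrow>real) \<Rightarrow> nat \<Rightarrow> nat \<Rightarrow> bool" where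
  "posg h i j \<longleftrightarrow> (\<forall>t\<in>{i..<j}. 0 < h t)"
definition ww :: "real \<Rightarrow> (nat\<Rightarrow>real) \<Rightarrow> nat \<Rightarrow> nat \<Rightarrow> real" where
  "ww s h i j = (if posg h i j then (\<Sum>t=i..<j. h t powr (-s)) powr (-1/s) else 0)"
definition GG :: "real \<Rightarrow> nat \<Rightarrow> (nat\<Rightarrow>real) \<Rightarrow> real" where
  "GG s p h = (\<Sum>i=1..p. \<Sum>j=i+1..p. ww s h i j)"
definition SS :: "nat \<Rightarrow> (nat\<Rightarrow>real) \<Rightarrow> real" where
  "SS p h = (\<Sum>k=1..<p. h k)"
definition hX :: "real \<Rightarrow> nat \<Rightarrow> (nat \<Rightarrow> real) \<Rightarrow> nat \<Rightarrow> real" where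
  "hX m p X = (\<lambda>k. if k \<in> {1..<p} then (X (k+1) - X k) powr (1-m) else 0)"

lemma ww_nonneg: "0 \<le> ww s h i j"
  by (simp add: ww_def)

lemma ww_le:
  assumes s: "s > 0" and t: "t \<in> {i..<j}" and nn: "0 \<le> h t"
  shows "ww s h i j \<le> h t"
proof (cases "posg h i j")
  case True
  have ht: "0 < h t" using True t by (simp add: posg_def)
  have "h t powr (-s) \<le> (\<Sum>t=i..<j. h t powr (-s))"
    by (rule member_le_sum) (use t in auto)
  moreover have "0 < h t powr (-s)" using ht by simp
  ultimately have "(\<Sum>t=i..<j. h t powr (-s)) powr (-1/s) \<le> (h t powr (-s)) powr (-1/s)"
    by (intro powr_mono2') (use s in auto)
  also have "\<dots> = h t" using ht s by (simp add: powr_powr)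
  finally show ?thesis using True by (simp add: ww_def)
qed (use nn in \<open>simp add: ww_def\<close>)

lemma ww_cong: "(\<And>t. t \<in> {i..<j} \<Longrightarrow> h t = h' t) \<Longrightarrow> ww s h i j = ww s h' i j"
proof -
  assume H: "\<And>t. t \<in> {i..<j} \<Longrightarrow> h t = h' t"
  have "posg h i j = posg h' i j" unfolding posg_def using H by auto
  moreover have "(\<Sum>t=i..<j. h t powr (-s)) = (\<Sum>t=i..<j. h' t powr (-s))"
    using H by (intro sum.cong) auto
  ultimately show ?thesis unfolding ww_def by simp
qed

lemma ww_scale:
  assumes c: "c > 0" and s: "s > 0"
  shows "ww s (\<lambda>k. c * h k) i j = c * ww s h i j"
proof -
  have P: "posg (\<lambda>k. c * h k) i j = posg h i j"
    unfolding posg_def using c by (simp add: zero_less_mult_iff)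
  show ?thesis
  proof (cases "posg h i j")
    case True
    have "(\<Sum>t=i..<j. (c * h t) powr (-s)) = c powr (-s) * (\<Sum>t=i..<j. h t powr (-s))"
      unfolding sum_distrib_left
      by (rule sum.cong) (use True c in \<open>auto simp: posg_def powr_mult\<close>)
    moreover have "(c powr (-s) * (\<Sum>t=i..<j. h t powr (-s))) powr (-1/s)
        = c * (\<Sum>t=i..<j. h t powr (-s)) powr (-1/s)"
      using c s by (simp add: powr_mult powr_powr sum_nonneg)
    ultimately show ?thesis using True P by (simp add: ww_def)
  qed (simp add: ww_def P)
qed

lemma GG_scale: "c > 0 \<Longrightarrow> s > 0 \<Longrightarrow> GG s p (\<lambda>k. c * h k) = c * GG s p h"
  by (simp add: GG_def ww_scale sum_distrib_left)

lemma GG_nonneg: "0 \<le> GG s p h"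
  by (simp add: GG_def sum_nonneg ww_nonneg)

lemma sum_lower_swap:
  fixes f :: "nat \<Rightarrow> nat \<Rightarrow> real"
  shows "(\<Sum>i=1..p. \<Sum>j=1..<i. f i j) = (\<Sum>j=1..p. \<Sum>i=j+1..p. f i j)"
proof -
  have "(\<Sum>i=1..p. \<Sum>j=1..<i. f i j) = (\<Sum>i=1..p. \<Sum>j=1..p. if j < i then f i j else 0)"
  proof (rule sum.cong)
    fix i assume "i \<in> {1..p}"
    then have "{j\<in>{1..p}. j < i} = {1..<i}" by auto
    then show "(\<Sum>j=1..<i. f i j) = (\<Sum>j=1..p. if j < i then f i j else 0)"
      by (metis (no_types) finite_atLeastAtMost sum.inter_filter)
  qed simp
  also have "\<dots> = (\<Sum>j=1..p. \<Sum>i=1..p. if j < i then f i j else 0)"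
    by (rule sum.swap)
  also have "\<dots> = (\<Sum>j=1..p. \<Sum>i=j+1..p. f i j)"
  proof (rule sum.cong)
    fix j assume "j \<in> {1..p}"
    then have "{i\<in>{1..p}. j < i} = {j+1..p}" by auto
    then show "(\<Sum>i=1..p. if j < i then f i j else 0) = (\<Sum>i=j+1..p. f i j)"
      by (metis (no_types) finite_atLeastAtMost sum.inter_filter)
  qed simp
  finally show ?thesis .
qed

lemma pair_sym:
  fixes f :: "nat \<Rightarrow> nat \<Rightarrow> real"
  assumes sym: "\<And>i j. f i j = f j i"
  shows "(\<Sum>i\<in>{1..p}. \<Sum>j\<in>{1..p}-{i}. f i j) = 2 * (\<Sum>i=1..p. \<Sum>j=i+1..p. f i j)"
proof -
  have "(\<Sum>i\<in>{1..p}. \<Sum>j\<in>{1..p}-{i}. f i j)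
      = (\<Sum>i\<in>{1..p}. (\<Sum>j=1..<i. f i j) + (\<Sum>j=i+1..p. f i j))"
  proof (rule sum.cong)
    fix i assume "i \<in> {1..p}"
    then have "{1..p}-{i} = {1..<i} \<union> {i+1..p}" by auto
    moreover have "{1..<i} \<inter> {i+1..p} = {}" by auto
    ultimately show "(\<Sum>j\<in>{1..p}-{i}. f i j) = (\<Sum>j=1..<i. f i j) + (\<Sum>j=i+1..p. f i j)"
      by (simp add: sum.union_disjoint)
  qed simp
  also have "\<dots> = (\<Sum>i=1..p. \<Sum>j=1..<i. f i j) + (\<Sum>i=1..p. \<Sum>j=i+1..p. f i j)"
    by (simp add: sum.distrib)
  also have "(\<Sum>i=1..p. \<Sum>j=1..<i. f i j) = (\<Sum>i=1..p. \<Sum>j=i+1..p. f i j)"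
    unfolding sum_lower_swap using sym by simp
  finally show ?thesis by simp
qed

lemma Rp_step: "X \<in> Rp p \<Longrightarrow> 1 \<le> i \<Longrightarrow> i < p \<Longrightarrow> X i < X (Suc i)"
proof -
  assume "X \<in> Rp p" "1 \<le> i" "i < p"
  then have "(\<forall>i\<in>{1..<p}. X i < X (i+1))" and "i \<in> {1..<p}" unfolding Rp_def by auto
  then show ?thesis by simp
qed

lemma Rp_mono_aux:
  assumes X: "X \<in> Rp p" and i: "1 \<le> i"
  shows "i + Suc d \<le> p \<Longrightarrow> X i < X (i + Suc d)"
proof (induction d)
  case 0 then show ?case using Rp_step[OF X i] by simp
next
  case (Suc d)
  then have "X i < X (i + Suc d)" by simp
  moreover have "X (i + Suc d) < X (Suc (i + Suc d))"
    using Rp_step[OF X, of "i + Suc d"] i Suc.prems by simp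
  ultimately show ?case by simp
qed

lemma Rp_mono:
  assumes X: "X \<in> Rp p" and i: "1 \<le> i" and ij: "i < j" and jp: "j \<le> p"
  shows "X i < X j"
proof -
  define d where "d = j - i - 1"
  have "j = i + Suc d" using ij unfolding d_def by simp
  then show ?thesis using Rp_mono_aux[OF X i, of d] jp by simp
qed

lemma adj_SS: "adj_sum m p X = SS p (hX m p X)"
  unfolding adj_sum_def SS_def hX_def by (intro sum.cong) auto

lemma pair_GG:
  assumes m: "m > 1" and X: "X \<in> Rp p"
  shows "pair_sum m p X = 2 * GG (1/(m-1)) p (hX m p X)"
proof -
  let ?s = "1/(m-1)"
  have "pair_sum m p X = 2 * (\<Sum>i=1..p. \<Sum>j=i+1..p. \<bar>X j - X i\<bar> powr (1-m))"
    unfolding pair_sum_def by (rule pair_sym) (simp add: abs_minus_commute)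
  also have "(\<Sum>i=1..p. \<Sum>j=i+1..p. \<bar>X j - X i\<bar> powr (1-m)) = GG ?s p (hX m p X)"
    unfolding GG_def
  proof (intro sum.cong refl)
    fix i j assume i: "i \<in> {1..p}" and j: "j \<in> {i+1..p}"
    have gp: "X t < X (t+1)" if "t \<in> {i..<j}" for t
      using Rp_step[OF X, of t] that i j by simp
    have pos: "posg (hX m p X) i j"
      unfolding posg_def
    proof
      fix t assume t: "t \<in> {i..<j}"
      then have "hX m p X t = (X (t+1) - X t) powr (1-m)" using i j by (auto simp: hX_def)
      then show "0 < hX m p X t" using gp[OF t] by simp
    qed
    have "(\<Sum>t=i..<j. hX m p X t powr (-?s)) = (\<Sum>t=i..<j. X (Suc t) - X t)"
    proof (rule sum.cong)
      fix t assume t: "t \<in> {i..<j}"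
      have "hX m p X t = (X (t+1) - X t) powr (1-m)" using t i j by (auto simp: hX_def)
      moreover have "((X (t+1) - X t) powr (1-m)) powr (-?s) = X (t+1) - X t"
      proof -
        have e: "(1-m) * (-?s) = 1" using m by (simp add: field_simps)
        show ?thesis using gp[OF t] by (simp only: powr_powr e powr_one_gt_zero_iff)
      qed
      ultimately show "hX m p X t powr (-?s) = X (Suc t) - X t" by simp
    qed simp
    also have "\<dots> = X j - X i" using j by (intro sum_Suc_diff') auto
    finally have "ww ?s (hX m p X) i j = (X j - X i) powr (-1/?s)"
      using pos by (simp add: ww_def)
    also have "\<dots> = \<bar>X j - X i\<bar> powr (1-m)"
      using Rp_mono[OF X, of i j] i j m by (simp add: divide_simps)
    finally show "\<bar>X j - X i\<bar> powr (1-m) = ww ?s (hX m p X) i j" by simp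
  qed
  finally show ?thesis .
qed

definition Aset :: "(nat\<Rightarrow>real) \<Rightarrow> nat \<Rightarrow> nat \<Rightarrow> nat set" where
  "Aset h p k = {j\<in>{k+1..p}. posg h k j}"
definition Bset :: "(nat\<Rightarrow>real) \<Rightarrow> nat \<Rightarrow> nat set" where
  "Bset h k = {i\<in>{1..k}. posg h i (k+1)}"

lemma GG_bound:
  assumes s: "s > 0" and nn: "\<And>k. k \<in> {1..<p} \<Longrightarrow> 0 \<le> h k" and p: "p \<ge> 1"
  shows "2 * GG s p h \<le> (\<Sum>k=1..<p. h k * (card (Aset h p k) + card (Bset h k)))"
proof -
  define F1 where "F1 i j = (if posg h i j then h i else 0)" for i j
  define F2 where "F2 i j = (if posg h i j then h (j-1) else 0)" for i j
  have "2 * GG s p h = (\<Sum>i=1..p. \<Sum>j=i+1..p. 2 * ww s h i j)"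
    by (simp add: GG_def sum_distrib_left)
  also have "\<dots> \<le> (\<Sum>i=1..p. \<Sum>j=i+1..p. F1 i j + F2 i j)"
  proof (intro sum_mono)
    fix i j assume i: "i \<in> {1..p}" and j: "j \<in> {i+1..p}"
    show "2 * ww s h i j \<le> F1 i j + F2 i j"
    proof (cases "posg h i j")
      case True
      have "ww s h i j \<le> h i" using i j nn by (intro ww_le s) auto
      moreover have "ww s h i j \<le> h (j-1)"
      proof -
        have "j - 1 \<in> {1..<p}" using i j by auto
        then show ?thesis using i j nn by (intro ww_le s) auto
      qed
      ultimately show ?thesis using True by (simp add: F1_def F2_def)
    qed (simp add: ww_def F1_def F2_def)
  qed
  also have "\<dots> = (\<Sum>i=1..p. \<Sum>j=i+1..p. F1 i j) + (\<Sum>i=1..p. \<Sum>j=i+1..p. F2 i j)"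
    by (simp add: sum.distrib)
  also have "(\<Sum>i=1..p. \<Sum>j=i+1..p. F1 i j) = (\<Sum>i=1..p. h i * card (Aset h p i))"
  proof (rule sum.cong)
    fix i assume "i \<in> {1..p}"
    have "(\<Sum>j=i+1..p. F1 i j) = (\<Sum>j\<in>Aset h p i. h i)"
      unfolding F1_def Aset_def by (rule sum.inter_filter[symmetric]) simp
    then show "(\<Sum>j=i+1..p. F1 i j) = h i * card (Aset h p i)" by simp
  qed simp
  also have "\<dots> = (\<Sum>i=1..<p. h i * card (Aset h p i))"
  proof -
    have "{1..p} = insert p {1..<p}" using p by auto
    moreover have "Aset h p p = {}" by (simp add: Aset_def)
    ultimately show ?thesis by simp
  qed
  also have "(\<Sum>i=1..p. \<Sum>j=i+1..p. F2 i j) = (\<Sum>j=1..p. \<Sum>i=1..<j. F2 i j)"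
    using sum_lower_swap[of "\<lambda>j i. F2 i j" p] by simp
  also have "\<dots> = (\<Sum>j=1..p. h (j-1) * card {i\<in>{1..<j}. posg h i j})"
  proof (rule sum.cong)
    fix j assume "j \<in> {1..p}"
    have "(\<Sum>i=1..<j. F2 i j) = (\<Sum>i\<in>{i\<in>{1..<j}. posg h i j}. h (j-1))"
      unfolding F2_def by (rule sum.inter_filter[symmetric]) simp
    then show "(\<Sum>i=1..<j. F2 i j) = h (j-1) * card {i\<in>{1..<j}. posg h i j}" by simp
  qed simp
  also have "\<dots> = (\<Sum>k=1..<p. h k * card (Bset h k))"
  proof -
    have "{1..p} = insert 1 {Suc 1..Suc (p-1)}" using p by auto
    then have "(\<Sum>j=1..p. h (j-1) * card {i\<in>{1..<j}. posg h i j})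
        = (\<Sum>j=Suc 1..Suc (p-1). h (j-1) * card {i\<in>{1..<j}. posg h i j})"
      by simp
    also have "\<dots> = (\<Sum>k=1..p-1. h k * card {i\<in>{1..<Suc k}. posg h i (Suc k)})"
      by (subst sum.shift_bounds_cl_Suc_ivl) simp
    also have "\<dots> = (\<Sum>k=1..<p. h k * card (Bset h k))"
    proof -
      have "{1..p-1} = {1..<p}" using p by auto
      moreover have "{i\<in>{1..<Suc k}. posg h i (Suc k)} = Bset h k" for k
        unfolding Bset_def by auto
      ultimately show ?thesis by simp
    qed
    finally show ?thesis .
  qed
  finally show ?thesis by (simp add: sum.distrib algebra_simps)
qed

definition Dl :: "nat \<Rightarrow> (nat\<Rightarrow>real) set" where
  "Dl p = {h. \<forall>k. h k \<in> (if k \<in> {1..<p} then {0..1} else {0})} \<inter> {h. SS p h = 1}"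

lemma compact_Dl: "compact (Dl p)"
proof -
  define T where "T k = (if k \<in> {1..<p} then {0..1::real} else {0})" for k
  have "compactin (product_topology (\<lambda>i. euclidean) UNIV) (Pi\<^sub>E UNIV T)"
    unfolding compactin_PiE T_def by (auto simp: compactin_euclidean_iff)
  then have c: "compact (Pi\<^sub>E UNIV T)"
    by (simp add: euclidean_product_topology compactin_euclidean_iff)
  have "Pi\<^sub>E UNIV T = {h. \<forall>k. h k \<in> (if k \<in> {1..<p} then {0..1} else {0})}"
    unfolding T_def by (auto simp: PiE_def Pi_def)
  moreover have "closed {h. SS p h = 1}"
    unfolding SS_def by (intro closed_Collect_eq continuous_intros) auto
  ultimately show ?thesis using c unfolding Dl_def by (metis compact_Int_closed)
qed

lemma coord_tendsto: "((\<lambda>h::nat\<Rightarrow>real. h t) \<longlongrightarrow> x t) (at x within S)"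
proof -
  have "continuous_on UNIV (\<lambda>h::nat\<Rightarrow>real. h t)" by simp
  then have "((\<lambda>h::nat\<Rightarrow>real. h t) \<longlongrightarrow> x t) (at x)"
    by (simp add: continuous_on_def)
  then show ?thesis by (rule tendsto_within_subset) simp
qed

lemma ww_cont:
  assumes s: "s > 0" and ij: "i < j"
  shows "continuous_on {h. \<forall>k. 0 \<le> h k} (\<lambda>h. ww s h i j)"
  unfolding continuous_on_def
proof
  fix x :: "nat \<Rightarrow> real" assume x: "x \<in> {h. \<forall>k. 0 \<le> h k}"
  let ?D = "{h::nat\<Rightarrow>real. \<forall>k. 0 \<le> h k}"
  show "((\<lambda>h. ww s h i j) \<longlongrightarrow> ww s x i j) (at x within ?D)"
  proof (cases "posg x i j")
    case True
    have ev: "eventually (\<lambda>h. \<forall>t\<in>{i..<j}. 0 < h t) (at x within ?D)"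
    proof (rule eventually_ball_finite)
      show "\<forall>t\<in>{i..<j}. eventually (\<lambda>h. 0 < h t) (at x within ?D)"
      proof
        fix t assume "t \<in> {i..<j}"
        then have "0 < x t" using True by (simp add: posg_def)
        then show "eventually (\<lambda>h. 0 < h t) (at x within ?D)"
          by (rule order_tendstoD(1)[OF coord_tendsto])
      qed
    qed simp
    have "((\<lambda>h. (\<Sum>t=i..<j. h t powr (-s)) powr (-1/s)) \<longlongrightarrow>
        (\<Sum>t=i..<j. x t powr (-s)) powr (-1/s)) (at x within ?D)"
    proof (rule tendsto_powr)
      show "((\<lambda>h. \<Sum>t=i..<j. h t powr (-s)) \<longlongrightarrow> (\<Sum>t=i..<j. x t powr (-s))) (at x within ?D)"
      proof (intro tendsto_sum tendsto_powr coord_tendsto tendsto_const)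
        fix t assume "t \<in> {i..<j}"
        then have "0 < x t" using True by (simp add: posg_def)
        then show "x t \<noteq> 0" by simp
      qed
      have "0 < (\<Sum>t=i..<j. x t powr (-s))"
      proof (rule sum_pos)
        fix t assume "t \<in> {i..<j}"
        then have "0 < x t" using True by (simp add: posg_def)
        then show "0 < x t powr (-s)" by simp
      qed (use ij in auto)
      then show "(\<Sum>t=i..<j. x t powr (-s)) \<noteq> 0" by simp
    qed simp
    moreover have "eventually (\<lambda>h. (\<Sum>t=i..<j. h t powr (-s)) powr (-1/s) = ww s h i j) (at x within ?D)"
      by (rule eventually_mono[OF ev]) (simp add: ww_def posg_def)
    ultimately have "((\<lambda>h. ww s h i j) \<longlongrightarrow> (\<Sum>t=i..<j. x t powr (-s)) powr (-1/s)) (at x within ?D)"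
      by (rule Lim_transform_eventually)
    then show ?thesis using True by (simp add: ww_def)
  next
    case False
    then obtain t0 where t0: "t0 \<in> {i..<j}" "\<not> 0 < x t0" by (auto simp: posg_def)
    then have x0: "x t0 = 0" using x by (metis less_eq_real_def mem_Collect_eq)
    have "((\<lambda>h. ww s h i j) \<longlongrightarrow> 0) (at x within ?D)"
    proof (rule tendsto_sandwich[of "\<lambda>h. 0" _ _ "\<lambda>h. h t0"])
      show "\<forall>\<^sub>F h in at x within ?D. 0 \<le> ww s h i j" by (simp add: ww_nonneg)
      show "\<forall>\<^sub>F h in at x within ?D. ww s h i j \<le> h t0"
        unfolding eventually_at_filter
        by (rule always_eventually) (use t0 s in \<open>auto intro: ww_le\<close>)
      show "((\<lambda>h. h t0) \<longlongrightarrow> 0) (at x within ?D)" using coord_tendsto[of t0 x] x0 by simp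
    qed simp
    moreover have "ww s x i j = 0" using False by (simp add: ww_def)
    ultimately show ?thesis by simp
  qed
qed

lemma GG_cont:
  assumes s: "s > 0"
  shows "continuous_on (Dl p) (GG s p)"
proof -
  have "Dl p \<subseteq> {h. \<forall>k. 0 \<le> h k}"
  proof (safe)
    fix h k assume "h \<in> Dl p"
    then have "h k \<in> (if k \<in> {1..<p} then {0..1} else {0})" by (simp add: Dl_def)
    then show "0 \<le> h k" by (auto split: if_splits)
  qed
  have "continuous_on {h. \<forall>k. 0 \<le> h k} (\<lambda>h. GG s p h)"
    unfolding GG_def by (intro continuous_on_sum ww_cont s) auto
  then show ?thesis using \<open>Dl p \<subseteq> _\<close> continuous_on_subset by blast
qed




definition NN :: "(nat\<Rightarrow>real) \<Rightarrow> nat \<Rightarrow> nat \<Rightarrow> nat" where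
  "NN h p k = card {i\<in>{1..k}. posg h i k} * card {j\<in>{k+1..p}. posg h (k+1) j}"

lemma cluster_bound:
  assumes nn: "\<And>k. k\<in>{1..<p} \<Longrightarrow> 0 \<le> h k" and k': "k' \<in> {1..<p}" "h k' > 0"
    and z: "z \<in> {1..<p}" "h z = 0"
  shows "\<exists>k\<in>{1..<p}. h k = 0 \<and> card (Aset h p k') + card (Bset h k') \<le> NN h p k"
proof -
  have fA: "finite (Aset h p k')" by (simp add: Aset_def)
  have fB: "finite (Bset h k')" by (simp add: Bset_def)
  have pk: "posg h k' (k'+1)" using k' by (simp add: posg_def)
  have kB: "k' \<in> Bset h k'" using k' pk by (simp add: Bset_def)
  have kA: "k'+1 \<in> Aset h p k'" using k' pk by (simp add: Aset_def)
  define a where "a = Min (Bset h k')"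
  define b where "b = Max (Aset h p k')"
  have aB: "a \<in> Bset h k'" unfolding a_def using fB kB by (intro Min_in) auto
  have bA: "b \<in> Aset h p k'" unfolding b_def using fA kA by (intro Max_in) auto
  have a1: "1 \<le> a" "a \<le> k'" and pa: "posg h a (k'+1)" using aB by (auto simp: Bset_def)
  have b1: "k'+1 \<le> b" "b \<le> p" and pb: "posg h k' b" using bA by (auto simp: Aset_def)
  have "Bset h k' \<subseteq> {a..k'}" unfolding a_def using fB by (auto simp: Bset_def)
  then have "card (Bset h k') \<le> card {a..k'}" by (intro card_mono) auto
  then have cB: "card (Bset h k') \<le> k' + 1 - a" by simp
  have "Aset h p k' \<subseteq> {k'+1..b}" unfolding b_def using fA by (auto simp: Aset_def)
  then have "card (Aset h p k') \<le> card {k'+1..b}" by (intro card_mono) auto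
  then have cA: "card (Aset h p k') \<le> b - k'" by simp
  have sum_le: "card (Aset h p k') + card (Bset h k') \<le> b + 1 - a" using cA cB a1 b1 by linarith
  have pab: "posg h a b" unfolding posg_def
  proof
    fix t assume "t \<in> {a..<b}"
    then show "0 < h t" using pa pb unfolding posg_def by (cases "t \<le> k'") auto
  qed
  show ?thesis
  proof (cases "b < p")
    case True
    have hb: "h b = 0"
    proof (rule ccontr)
      assume "h b \<noteq> 0"
      then have "h b > 0" using nn[of b] True b1 by auto
      then have hb: "0 < h b" .
      have pb': "\<forall>t\<in>{k'..<b}. 0 < h t" using pb by (simp add: posg_def)
      have "posg h k' (b+1)" unfolding posg_def
        proof
          fix t assume t: "t \<in> {k'..<b+1}"
          show "0 < h t" proof (cases "t = b")
            case True then show ?thesis using hb by simp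
          next
            case False then show ?thesis using t pb' by auto
          qed
        qed
      then have "b+1 \<in> Aset h p k'" using True b1 by (simp add: Aset_def)
      then have "b+1 \<le> b" unfolding b_def using Max_ge[OF fA] by blast
      then show False by simp
    qed
    have "{a..b} \<subseteq> {i\<in>{1..b}. posg h i b}" using a1 pab by (auto simp: posg_def)
    then have c1: "b + 1 - a \<le> card {i\<in>{1..b}. posg h i b}"
      using card_mono[of "{i\<in>{1..b}. posg h i b}" "{a..b}"] by simp
    have "b+1 \<in> {j\<in>{b+1..p}. posg h (b+1) j}" using True by (simp add: posg_def)
    then have "0 < card {j\<in>{b+1..p}. posg h (b+1) j}" by (auto simp: card_gt_0_iff)
    then have c2: "1 \<le> card {j\<in>{b+1..p}. posg h (b+1) j}" by simp
    have "b + 1 - a \<le> NN h p b" unfolding NN_def using c1 c2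
      using mult_le_mono[OF c1 c2] by simp
    then show ?thesis using sum_le hb True b1 a1 by (intro bexI[of _ b]) auto
  next
    case False
    then have bp: "b = p" using b1 by simp
    have "z < a"
    proof (rule ccontr)
      assume "\<not> z < a"
      then have "z \<in> {a..<b}" using z bp by auto
      then have "0 < h z" using pab by (simp add: posg_def)
      then show False using z by simp
    qed
    then have a2: "2 \<le> a" using z by auto
    let ?c = "a - 1"
    have c_in: "?c \<in> {1..<p}" using a2 a1 k' by auto
    have hc: "h ?c = 0"
    proof (rule ccontr)
      assume "h ?c \<noteq> 0"
      then have "h ?c > 0" using nn[OF c_in] by auto
      then have hc: "0 < h ?c" .
      have pa': "\<forall>t\<in>{a..<k'+1}. 0 < h t" using pa by (simp add: posg_def)
      have "posg h ?c (k'+1)" unfolding posg_def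
        proof
          fix t assume t: "t \<in> {?c..<k'+1}"
          show "0 < h t" proof (cases "t = ?c")
            case True then show ?thesis using hc by simp
          next
            case False then show ?thesis using t pa' a2 by auto
          qed
        qed
      then have "?c \<in> Bset h k'" unfolding Bset_def using a1 a2 by auto
      then have "a \<le> ?c" unfolding a_def using Min_le[OF fB] by blast
      then show False using a2 by simp
    qed
    have "{a..b} \<subseteq> {j\<in>{?c+1..p}. posg h (?c+1) j}" using a2 b1 pab by (auto simp: posg_def)
    then have c1: "b + 1 - a \<le> card {j\<in>{?c+1..p}. posg h (?c+1) j}"
      using card_mono[of "{j\<in>{?c+1..p}. posg h (?c+1) j}" "{a..b}"] by simp
    have "?c \<in> {i\<in>{1..?c}. posg h i ?c}" using c_in by (simp add: posg_def)
    then have "0 < card {i\<in>{1..?c}. posg h i ?c}" by (auto simp: card_gt_0_iff)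
    then have c2: "1 \<le> card {i\<in>{1..?c}. posg h i ?c}" by simp
    have "b + 1 - a \<le> NN h p ?c" unfolding NN_def using c1 c2
      using mult_le_mono[OF c2 c1] by simp
    then show ?thesis using sum_le hc c_in by (intro bexI[of _ ?c]) auto
  qed
qed

lemma Dl_nn: "h \<in> Dl p \<Longrightarrow> 0 \<le> h k"
proof -
  assume "h \<in> Dl p"
  then have "h k \<in> (if k \<in> {1..<p} then {0..1} else {0})" by (simp add: Dl_def)
  then show "0 \<le> h k" by (auto split: if_splits)
qed

lemma Dl_zero: "h \<in> Dl p \<Longrightarrow> k \<notin> {1..<p} \<Longrightarrow> h k = 0"
proof -
  assume "h \<in> Dl p" "k \<notin> {1..<p}"
  then have "h k \<in> (if k \<in> {1..<p} then {0..1} else {0})" by (simp add: Dl_def)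
  then show "h k = 0" using \<open>k \<notin> _\<close> by (simp only: if_False singleton_iff)
qed

lemma Dl_SS: "h \<in> Dl p \<Longrightarrow> SS p h = 1"
  by (simp add: Dl_def)

lemma Dl_intro:
  assumes nn: "\<And>k. k \<in> {1..<p} \<Longrightarrow> 0 \<le> h k" and z: "\<And>k. k \<notin> {1..<p} \<Longrightarrow> h k = 0"
    and S: "SS p h = 1"
  shows "h \<in> Dl p"
proof -
  have "h k \<in> (if k \<in> {1..<p} then {0..1} else {0})" for k
  proof (cases "k \<in> {1..<p}")
    case True
    have "h k \<le> (\<Sum>k=1..<p. h k)" by (rule member_le_sum) (use True nn in auto)
    then show ?thesis using True nn[OF True] S by (simp add: SS_def)
  qed (use z in simp)
  then show ?thesis using S unfolding Dl_def by blast
qed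

lemma GG_le_N:
  assumes s: "s > 0" and h: "h \<in> Dl p" and z: "z \<in> {1..<p}" "h z = 0" and p: "p \<ge> 1"
  shows "\<exists>k\<in>{1..<p}. h k = 0 \<and> 2 * GG s p h \<le> NN h p k"
proof -
  define Z where "Z = {k\<in>{1..<p}. h k = 0}"
  have fZ: "finite Z" and nZ: "Z \<noteq> {}" using z by (auto simp: Z_def)
  define M where "M = Max (NN h p ` Z)"
  have "M \<in> NN h p ` Z" unfolding M_def using fZ nZ by (intro Max_in) auto
  then obtain kz where kz: "kz \<in> Z" "NN h p kz = M" by auto
  have Mge: "NN h p k \<le> M" if "k \<in> Z" for k
    unfolding M_def using fZ that by (intro Max_ge) auto
  have nn: "\<And>k. k\<in>{1..<p} \<Longrightarrow> 0 \<le> h k" using h Dl_nn by blast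
  have "2 * GG s p h \<le> (\<Sum>k=1..<p. h k * (card (Aset h p k) + card (Bset h k)))"
    by (rule GG_bound[OF s nn p])
  also have "\<dots> \<le> (\<Sum>k=1..<p. h k * M)"
  proof (rule sum_mono)
    fix k assume k: "k \<in> {1..<p}"
    show "h k * (card (Aset h p k) + card (Bset h k)) \<le> h k * M"
    proof (cases "h k = 0")
      case False
      then have hk: "h k > 0" using nn[OF k] by simp
      obtain k2 where k2: "k2 \<in> {1..<p}" "h k2 = 0"
        "card (Aset h p k) + card (Bset h k) \<le> NN h p k2"
        using cluster_bound[OF nn k hk z] by blast
      then have "card (Aset h p k) + card (Bset h k) \<le> M" using Mge[of k2] by (simp add: Z_def)
      then have "real (card (Aset h p k) + card (Bset h k)) \<le> real M" by linarith
      then show ?thesis using hk by (simp add: mult_left_mono)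
    qed simp
  qed
  also have "\<dots> = M * SS p h" by (simp add: SS_def sum_distrib_left mult.commute)
  also have "\<dots> = M" using Dl_SS[OF h] by simp
  finally show ?thesis using kz by (intro bexI[of _ kz]) (auto simp: Z_def)
qed

lemma improve:
  assumes s: "s > 0" and p: "p \<ge> 2" and h0: "h0 \<in> Dl p" and z: "z \<in> {1..<p}" "h0 z = 0"
  shows "\<exists>h\<in>Dl p. GG s p h0 < GG s p h"
proof -
  obtain kz where kz: "kz \<in> {1..<p}" "h0 kz = 0" "2 * GG s p h0 \<le> NN h0 p kz"
    using GG_le_N[OF s h0 z] p by auto
  define L where "L = {i\<in>{1..kz}. posg h0 i kz}"
  define R where "R = {j\<in>{kz+1..p}. posg h0 (kz+1) j}"
  have fL: "finite L" and fR: "finite R" by (auto simp: L_def R_def)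
  have "kz \<in> L" using kz by (simp add: L_def posg_def)
  then have cL: "1 \<le> card L" using fL by (metis One_nat_def Suc_leI card_gt_0_iff empty_iff)
  have "kz+1 \<in> R" using kz by (simp add: R_def posg_def)
  then have cR: "1 \<le> card R" using fR by (metis One_nat_def Suc_leI card_gt_0_iff empty_iff)
  define G0 where "G0 = GG s p h0"
  define N where "N = real (card L) * real (card R)"
  have N1: "N \<ge> 1" unfolding N_def using cL cR
    by (metis mult_le_mono of_nat_1 of_nat_le_iff of_nat_mult mult_1)
  have G0N: "2 * G0 \<le> N" using kz(3) unfolding G0_def N_def NN_def L_def R_def by simp
  have G0nn: "0 \<le> G0" unfolding G0_def by (rule GG_nonneg)
  define \<theta> where "\<theta> = (G0 + N) / (2 * N)"
  have th0: "0 < \<theta>" unfolding \<theta>_def using N1 G0nn by simp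
  have th1: "\<theta> < 1" unfolding \<theta>_def using N1 G0N by (simp add: field_simps)
  have thN: "G0 < \<theta> * N" unfolding \<theta>_def using N1 G0N by (simp add: field_simps)
  define c where "c = \<theta> powr (-s)"
  have "\<theta> powr s < 1 powr s" using th0 th1 s by (intro powr_less_mono2) auto
  then have "\<theta> powr s < 1" by simp
  then have c1: "c > 1" unfolding c_def using th0 by (simp add: powr_minus field_simps)
  define As where "As = (\<Sum>t=1..<p. h0 t powr (-s))"
  have As0: "0 \<le> As" unfolding As_def by (simp add: sum_nonneg)
  define x where "x = As / (c - 1) + 1"
  have x0: "x > 0" unfolding x_def using c1 As0 by (simp add: add_nonneg_pos)
  have "(c - 1) * x = As + (c - 1)" unfolding x_def distrib_left using c1 by simp
  then have Asx: "As \<le> (c - 1) * x" using c1 by simp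
  define \<epsilon> where "\<epsilon> = x powr (-1/s)"
  have e0: "\<epsilon> > 0" unfolding \<epsilon>_def using x0 by simp
  have ex: "\<epsilon> powr (-s) = x" unfolding \<epsilon>_def using x0 s by (simp add: powr_powr)
  have thc: "c powr (-1/s) = \<theta>" unfolding c_def using th0 s by (simp add: powr_powr)
  define he where "he k = h0 k + (if k = kz then \<epsilon> else 0)" for k
  have nn0: "0 \<le> h0 k" for k using Dl_nn[OF h0] .
  have he_eq: "he t = h0 t" if "t \<noteq> kz" for t using that by (simp add: he_def)
  have he_kz: "he kz = \<epsilon>" using kz by (simp add: he_def)
  have SSe: "SS p he = 1 + \<epsilon>"
  proof -
    have "SS p he = SS p h0 + (\<Sum>k=1..<p. if k = kz then \<epsilon> else 0)"
      by (simp add: SS_def he_def sum.distrib)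
    also have "(\<Sum>k=1..<p. if k = kz then \<epsilon> else 0) = \<epsilon>" using kz(1) by simp
    finally show ?thesis using Dl_SS[OF h0] by simp
  qed
  have key: "\<theta> * \<epsilon> \<le> ww s he i j" if i: "i \<in> L" and j: "j \<in> R" for i j
  proof -
    have i1: "1 \<le> i" "i \<le> kz" and pi: "posg h0 i kz" using i by (auto simp: L_def)
    have j1: "kz < j" "j \<le> p" and pj: "posg h0 (kz+1) j" using j by (auto simp: R_def)
    have pos: "posg he i j" unfolding posg_def
    proof
      fix t assume t: "t \<in> {i..<j}"
      show "0 < he t"
      proof (cases "t = kz")
        case True then show ?thesis using he_kz e0 by simp
      next
        case False
        then have "0 < h0 t" using t pi pj unfolding posg_def by (cases "t < kz") auto
        then show ?thesis using False he_eq by simp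
      qed
    qed
    have kzin: "kz \<in> {i..<j}" using i1 j1 by auto
    have "(\<Sum>t=i..<j. he t powr (-s)) = he kz powr (-s) + (\<Sum>t\<in>{i..<j}-{kz}. he t powr (-s))"
      by (rule sum.remove) (use kzin in auto)
    also have "(\<Sum>t\<in>{i..<j}-{kz}. he t powr (-s)) = (\<Sum>t\<in>{i..<j}-{kz}. h0 t powr (-s))"
      by (rule sum.cong) (auto simp: he_eq)
    finally have Sg: "(\<Sum>t=i..<j. he t powr (-s)) = x + (\<Sum>t\<in>{i..<j}-{kz}. h0 t powr (-s))"
      using he_kz ex by simp
    have "(\<Sum>t\<in>{i..<j}-{kz}. h0 t powr (-s)) \<le> As"
      unfolding As_def by (rule sum_mono2) (use i1 j1 in auto)
    moreover have "0 \<le> (\<Sum>t\<in>{i..<j}-{kz}. h0 t powr (-s))" by (simp add: sum_nonneg)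
    ultimately have Sg1: "0 < (\<Sum>t=i..<j. he t powr (-s))" "(\<Sum>t=i..<j. he t powr (-s)) \<le> c * x"
      using Sg x0 Asx by (auto simp: algebra_simps)
    have "(c * x) powr (-1/s) \<le> (\<Sum>t=i..<j. he t powr (-s)) powr (-1/s)"
      by (rule powr_mono2') (use Sg1 s in auto)
    moreover have "(c * x) powr (-1/s) = \<theta> * \<epsilon>"
      using c1 x0 thc by (simp add: powr_mult \<epsilon>_def)
    ultimately show ?thesis using pos by (simp add: ww_def)
  qed
  define v where "v = \<theta> * \<epsilon>"
  have diff: "(if i \<in> L \<and> j \<in> R then v else 0) \<le> ww s he i j - ww s h0 i j"
    if i: "i \<in> {1..p}" and j: "j \<in> {i+1..p}" for i j
  proof (cases "kz \<in> {i..<j}")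
    case True
    then have "\<not> posg h0 i j" using kz(2) unfolding posg_def by force
    then have "ww s h0 i j = 0" by (simp add: ww_def)
    then show ?thesis using key[of i j] ww_nonneg[of s he i j] by (simp add: v_def)
  next
    case False
    then have "ww s he i j = ww s h0 i j" by (intro ww_cong) (auto simp: he_eq)
    moreover have "\<not> (i \<in> L \<and> j \<in> R)" using False by (auto simp: L_def R_def)
    ultimately show ?thesis by (simp only: if_False)
  qed
  have sumF: "(\<Sum>i=1..p. \<Sum>j=i+1..p. (if i \<in> L \<and> j \<in> R then v else 0)) = N * v"
  proof -
    have "(\<Sum>i=1..p. \<Sum>j=i+1..p. (if i \<in> L \<and> j \<in> R then v else 0))
        = (\<Sum>i=1..p. if i \<in> L then card R * v else 0)"
    proof (rule sum.cong)
      fix i assume i: "i \<in> {1..p}"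
      show "(\<Sum>j=i+1..p. (if i \<in> L \<and> j \<in> R then v else 0)) = (if i \<in> L then card R * v else 0)"
      proof (cases "i \<in> L")
        case True
        then have "i \<le> kz" by (simp add: L_def)
        then have "{j\<in>{i+1..p}. j \<in> R} = R" by (auto simp: R_def)
        moreover have "(\<Sum>j=i+1..p. (if j \<in> R then v else 0)) = (\<Sum>j\<in>{j\<in>{i+1..p}. j \<in> R}. v)"
          by (rule sum.inter_filter[symmetric]) simp
        ultimately show ?thesis using True by simp
      qed simp
    qed simp
    also have "\<dots> = (\<Sum>i\<in>{i\<in>{1..p}. i \<in> L}. card R * v)"
      by (rule sum.inter_filter[symmetric]) simp
    also have "{i\<in>{1..p}. i \<in> L} = L" using kz by (auto simp: L_def)
    finally show ?thesis by (simp add: N_def)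
  qed
  have "N * v \<le> GG s p he - G0"
  proof -
    have "N * v \<le> (\<Sum>i=1..p. \<Sum>j=i+1..p. ww s he i j - ww s h0 i j)"
      unfolding sumF[symmetric] by (intro sum_mono diff) auto
    also have "\<dots> = GG s p he - G0" by (simp add: GG_def G0_def sum_subtractf)
    finally show ?thesis .
  qed
  then have Ghe: "G0 * (1 + \<epsilon>) < GG s p he"
  proof -
    have "G0 * \<epsilon> < \<theta> * N * \<epsilon>" using thN e0 by simp
    then show ?thesis using \<open>N * v \<le> _\<close> unfolding v_def by (simp add: algebra_simps)
  qed
  define hn where "hn k = (1 / (1 + \<epsilon>)) * he k" for k
  have hn_in: "hn \<in> Dl p"
  proof (rule Dl_intro)
    fix k show "0 \<le> hn k" if "k \<in> {1..<p}" using e0 nn0[of k] by (simp add: hn_def he_def)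
  next
    fix k assume "k \<notin> {1..<p}"
    then show "hn k = 0" using Dl_zero[OF h0] kz by (auto simp: hn_def he_def)
  next
    have "SS p hn = (1 / (1 + \<epsilon>)) * SS p he" unfolding SS_def hn_def by (rule sum_distrib_left[symmetric])
    then show "SS p hn = 1" using SSe e0 by simp
  qed
  have "GG s p hn = GG s p he / (1 + \<epsilon>)"
    unfolding hn_def using e0 s by (subst GG_scale) auto
  then have "GG s p he = GG s p hn * (1 + \<epsilon>)" using e0 by (simp add: field_simps)
  then have "G0 * (1 + \<epsilon>) < GG s p hn * (1 + \<epsilon>)" using Ghe by simp
  then have "G0 < GG s p hn" using e0 by (simp add: mult_less_cancel_right_pos)
  then show ?thesis using hn_in unfolding G0_def by blast
qed



lemma Rp_scale:
  assumes t: "t > 0" and X: "X \<in> Rp p"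
  shows "(\<lambda>i. t * X i) \<in> Rp p"
proof -
  have a: "\<forall>i\<in>{1..<p}. X i < X (i+1)" and b: "(\<Sum>i=1..p. X i) = 0" using X by (simp_all add: Rp_def)
  have "\<forall>i\<in>{1..<p}. t * X i < t * X (i+1)" using a t by simp
  moreover have "(\<Sum>i=1..p. t * X i) = 0" using b by (simp add: sum_distrib_left[symmetric])
  ultimately show ?thesis unfolding Rp_def by blast
qed

lemma adj_scale:
  assumes t: "t > 0" and X: "X \<in> Rp p"
  shows "adj_sum m p (\<lambda>i. t * X i) = t powr (1-m) * adj_sum m p X"
  unfolding adj_sum_def sum_distrib_left
proof (rule sum.cong)
  fix i assume i: "i \<in> {1..<p}"
  have "X i < X (i+1)" using Rp_step[OF X, of i] i by simp
  then have "(t * X (i+1) - t * X i) powr (1-m) = (t * (X (i+1) - X i)) powr (1-m)"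
    by (simp add: algebra_simps)
  also have "\<dots> = t powr (1-m) * (X (i+1) - X i) powr (1-m)"
    using t \<open>X i < X (i+1)\<close> by (simp add: powr_mult)
  finally show "(t * X (i+1) - t * X i) powr (1-m) = t powr (1-m) * (X (i+1) - X i) powr (1-m)" .
qed simp

lemma pair_scale:
  assumes t: "t > 0"
  shows "pair_sum m p (\<lambda>i. t * X i) = t powr (1-m) * pair_sum m p X"
  unfolding pair_sum_def sum_distrib_left
proof (intro sum.cong refl)
  fix i j
  have "\<bar>t * X j - t * X i\<bar> = t * \<bar>X j - X i\<bar>"
  proof -
    have "t * X j - t * X i = t * (X j - X i)" by (simp add: right_diff_distrib)
    then show ?thesis using t by (simp add: abs_mult)
  qed
  then show "\<bar>t * X j - t * X i\<bar> powr (1-m) = t powr (1-m) * \<bar>X j - X i\<bar> powr (1-m)"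
    using t by (simp add: powr_mult)
qed

lemma hX_pos: "X \<in> Rp p \<Longrightarrow> k \<in> {1..<p} \<Longrightarrow> 0 < hX m p X k"
  using Rp_step[of X p k] by (simp add: hX_def)

lemma SS_pos: assumes X: "X \<in> Rp p" and p: "p \<ge> 2" shows "0 < SS p (hX m p X)"
  unfolding SS_def by (rule sum_pos) (use p hX_pos[OF X] in auto)

lemma pair_pos:
  assumes X: "X \<in> Rp p" and p: "p \<ge> 2"
  shows "0 < pair_sum m p X"
  unfolding pair_sum_def
proof (rule sum_pos)
  fix i assume i: "i \<in> {1..p}"
  show "0 < (\<Sum>j\<in>{1..p} - {i}. \<bar>X j - X i\<bar> powr (1 - m))"
  proof (rule sum_pos)
    fix j assume j: "j \<in> {1..p} - {i}"
    have "X j \<noteq> X i"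
    proof (cases "i < j")
      case True then show ?thesis using Rp_mono[OF X, of i j] i j by auto
    next
      case False then have "j < i" using j by auto
      then show ?thesis using Rp_mono[OF X, of j i] i j by auto
    qed
    then show "0 < \<bar>X j - X i\<bar> powr (1 - m)" by simp
  next
    show "{1..p} - {i} \<noteq> {}"
    proof (cases "i = 1")
      case True then have "2 \<in> {1..p} - {i}" using p by auto
      then show ?thesis by blast
    next
      case False then have "1 \<in> {1..p} - {i}" using p by auto
      then show ?thesis by blast
    qed
  qed simp
qed (use p in auto)

lemma ratio_GG:
  assumes m: "m > 1" and X: "X \<in> Rp p"
  shows "ratio m p X = 2 * GG (1/(m-1)) p (hX m p X) / SS p (hX m p X)"
  unfolding ratio_def using pair_GG[OF m X] adj_SS by simp

lemma GG_le_p: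
  assumes s: "s > 0" and nn: "\<And>k. k \<in> {1..<p} \<Longrightarrow> 0 \<le> h k" and p: "p \<ge> 1"
  shows "2 * GG s p h \<le> p * SS p h"
proof -
  have "2 * GG s p h \<le> (\<Sum>k=1..<p. h k * (card (Aset h p k) + card (Bset h k)))"
    by (rule GG_bound[OF s nn p])
  also have "\<dots> \<le> (\<Sum>k=1..<p. h k * p)"
  proof (rule sum_mono)
    fix k assume k: "k \<in> {1..<p}"
    have "card (Aset h p k) \<le> card {k+1..p}" by (rule card_mono) (auto simp: Aset_def)
    moreover have "card (Bset h k) \<le> card {1..k}" by (rule card_mono) (auto simp: Bset_def)
    ultimately have "card (Aset h p k) + card (Bset h k) \<le> p" using k by (simp del: card_atLeastAtMost) (simp, arith)
    then have "real (card (Aset h p k) + card (Bset h k)) \<le> real p" by linarith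
    then show "h k * (card (Aset h p k) + card (Bset h k)) \<le> h k * p"
      using nn[OF k] by (simp add: mult_left_mono)
  qed
  also have "\<dots> = p * SS p h" by (simp add: SS_def sum_distrib_left mult.commute)
  finally show ?thesis .
qed

lemma exists_max:
  assumes m: "m > 1" and p: "p \<ge> 2"
  shows "\<exists>X\<in>Rp p. \<forall>Y\<in>Rp p. ratio m p Y \<le> ratio m p X"
proof -
  define s where "s = 1/(m-1)"
  have s: "s > 0" using m by (simp add: s_def)
  define h1 where "h1 k = (if k \<in> {1..<p} then 1 / real (p-1) else 0)" for k
  have "h1 \<in> Dl p"
  proof (rule Dl_intro)
    show "SS p h1 = 1" using p by (simp add: SS_def h1_def)
  qed (auto simp: h1_def)
  then have ne: "Dl p \<noteq> {}" by blast
  obtain hs where hs: "hs \<in> Dl p" and hmax: "\<And>y. y \<in> Dl p \<Longrightarrow> GG s p y \<le> GG s p hs"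
    using continuous_attains_sup[OF compact_Dl ne GG_cont[OF s]] by blast
  have hpos: "0 < hs k" if k: "k \<in> {1..<p}" for k
  proof (rule ccontr)
    assume "\<not> 0 < hs k"
    then have "hs k = 0" using Dl_nn[OF hs, of k] by simp
    then obtain h where "h \<in> Dl p" "GG s p hs < GG s p h" using improve[OF s p hs k] by blast
    then show False using hmax by fastforce
  qed
  define g where "g k = hs k powr (-s)" for k
  define P where "P i = (\<Sum>k=1..<i. g k)" for i
  define cst where "cst = (\<Sum>i=1..p. P i) / p"
  define Xs where "Xs i = P i - cst" for i
  have step: "Xs (i+1) - Xs i = g i" if "1 \<le> i" for i
    using that by (simp add: Xs_def P_def)
  have Xs_in: "Xs \<in> Rp p"
  proof -
    have "\<forall>i\<in>{1..<p}. Xs i < Xs (i+1)"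
    proof
      fix i assume i: "i \<in> {1..<p}"
      have "0 < g i" using hpos[OF i] by (simp add: g_def)
      then show "Xs i < Xs (i+1)" using step[of i] i by simp
    qed
    moreover have "(\<Sum>i=1..p. Xs i) = 0"
      using p by (simp add: Xs_def sum_subtractf cst_def)
    ultimately show ?thesis unfolding Rp_def by blast
  qed
  have hXs: "hX m p Xs = hs"
  proof
    fix k show "hX m p Xs k = hs k"
    proof (cases "k \<in> {1..<p}")
      case True
      have "hX m p Xs k = g k powr (1-m)" using True step[of k] by (simp add: hX_def)
      also have "\<dots> = hs k powr ((-s) * (1-m))" unfolding g_def by (simp add: powr_powr)
      also have "(-s) * (1-m) = 1" using m by (simp add: s_def field_simps)
      finally show ?thesis using hpos[OF True] by simp
    next
      case False
      have "hX m p Xs k = 0" by (simp only: hX_def if_not_P[OF False])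
      then show ?thesis using Dl_zero[OF hs False] by simp
    qed
  qed
  have rXs: "ratio m p Xs = 2 * GG s p hs"
    using ratio_GG[OF m Xs_in] hXs Dl_SS[OF hs] by (simp add: s_def)
  show ?thesis
  proof (intro bexI[OF _ Xs_in] ballI)
    fix Y assume Y: "Y \<in> Rp p"
    define hY where "hY = hX m p Y"
    define S where "S = SS p hY"
    have S0: "S > 0" unfolding S_def hY_def using SS_pos[OF Y p] .
    define hn where "hn k = (1/S) * hY k" for k
    have "hn \<in> Dl p"
    proof (rule Dl_intro)
      fix k show "0 \<le> hn k" if "k \<in> {1..<p}"
        using hX_pos[OF Y that, of m] S0 by (simp add: hn_def hY_def)
    next
      fix k assume k: "k \<notin> {1..<p}"
      have "hY k = 0" unfolding hY_def by (simp only: hX_def if_not_P[OF k])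
      then show "hn k = 0" by (simp add: hn_def)
    next
      have "SS p hn = (1/S) * SS p hY" unfolding SS_def hn_def by (rule sum_distrib_left[symmetric])
      then show "SS p hn = 1" using S0 by (simp add: S_def)
    qed
    then have "GG s p hn \<le> GG s p hs" by (rule hmax)
    moreover have "GG s p hn = GG s p hY / S" unfolding hn_def using S0 s by (subst GG_scale) auto
    moreover have "ratio m p Y = 2 * GG s p hY / S"
      using ratio_GG[OF m Y] by (simp add: s_def S_def hY_def)
    ultimately show "ratio m p Y \<le> ratio m p Xs" using rXs by simp
  qed
qed

lemma ratio_le_p:
  assumes m: "m > 1" and p: "p \<ge> 2" and Y: "Y \<in> Rp p"
  shows "ratio m p Y \<le> p"
proof -
  have s: "1/(m-1) > 0" using m by simp
  have "2 * GG (1/(m-1)) p (hX m p Y) \<le> p * SS p (hX m p Y)"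
    by (rule GG_le_p[OF s]) (use hX_pos[OF Y] p in \<open>auto intro: less_imp_le\<close>)
  moreover have "ratio m p Y * SS p (hX m p Y) = 2 * GG (1/(m-1)) p (hX m p Y)"
    using ratio_GG[OF m Y] SS_pos[OF Y p, of m] by simp
  ultimately have "ratio m p Y * SS p (hX m p Y) \<le> p * SS p (hX m p Y)" by simp
  then show ?thesis using SS_pos[OF Y p, of m] by simp
qed

lemma ratio_pos:
  assumes p: "p \<ge> 2" and Y: "Y \<in> Rp p"
  shows "0 < ratio m p Y"
  unfolding ratio_def using pair_pos[OF Y p] SS_pos[OF Y p, of m] adj_SS[of m p Y] by simp

theorem proposition2p3:
  fixes m \<chi> :: real and p :: nat
  assumes "m > 1" and "\<chi> > 0" and "p \<ge> 2"
  shows "(\<exists>X\<in>Rp p. \<forall>Y\<in>Rp p. ratio m p Y \<le> ratio m p X)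
    \<and> 1 / Cp m p \<le> real p
    \<and> (\<forall>\<alpha>::real. \<alpha> \<ge> 0 \<longrightarrow> (bdd_below (Fp m \<chi> \<alpha> p ` Rp p) \<longleftrightarrow> \<chi> \<le> Cp m p))"
proof -
  have m: "m > 1" and chi: "\<chi> > 0" and p: "p \<ge> 2" using assms by auto
  obtain Xs where Xs: "Xs \<in> Rp p" and mx: "\<And>Y. Y \<in> Rp p \<Longrightarrow> ratio m p Y \<le> ratio m p Xs"
    using exists_max[OF m p] by blast
  define M where "M = ratio m p Xs"
  have SUP: "(SUP X\<in>Rp p. ratio m p X) = M"
    unfolding M_def by (rule cSup_eq_maximum) (use Xs mx in auto)
  have Cp: "Cp m p = 1 / M" by (simp add: Cp_def SUP)
  have M0: "M > 0" unfolding M_def by (rule ratio_pos[OF p Xs])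
  have Mp: "M \<le> p" unfolding M_def by (rule ratio_le_p[OF m p Xs])
  have part3: "bdd_below (Fp m \<chi> \<alpha> p ` Rp p) \<longleftrightarrow> \<chi> \<le> Cp m p" if al: "\<alpha> \<ge> 0" for \<alpha>
  proof
    assume "bdd_below (Fp m \<chi> \<alpha> p ` Rp p)"
    then obtain B where B: "\<And>X. X \<in> Rp p \<Longrightarrow> B \<le> Fp m \<chi> \<alpha> p X"
      unfolding bdd_below_def by auto
    show "\<chi> \<le> Cp m p"
    proof (rule ccontr)
      assume "\<not> \<chi> \<le> Cp m p"
      then have cM: "\<chi> * M > 1" using M0 by (simp add: Cp field_simps)
      define a where "a = adj_sum m p Xs"
      have a0: "a > 0" unfolding a_def using SS_pos[OF Xs p, of m] adj_SS by simp
      have q: "pair_sum m p Xs = M * a" unfolding M_def a_def ratio_def using a0 by (simp add: a_def)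
      define K where "K = (\<chi> * (M * a) - a) / (m - 1)"
      have K0: "K > 0" unfolding K_def using m a0 cM
        by (simp add: algebra_simps)
      define Q where "Q = (\<Sum>i=1..p. (Xs i)^2)"
      define y where "y = max 1 ((\<alpha> * Q / 2 - B) / K + 1)"
      have y1: "y \<ge> 1" by (simp add: y_def)
      have yK: "y * K > \<alpha> * Q / 2 - B"
      proof -
        have "(\<alpha> * Q / 2 - B) / K + 1 \<le> y" by (simp add: y_def)
        then have "((\<alpha> * Q / 2 - B) / K + 1) * K \<le> y * K" using K0 by (simp add: mult_right_mono)
        moreover have "((\<alpha> * Q / 2 - B) / K + 1) * K = \<alpha> * Q / 2 - B + K"
          using K0 by (simp add: field_simps)
        ultimately show ?thesis using K0 by linarith
      qed
      define t where "t = y powr (-1/(m-1))"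
      have t0: "t > 0" using y1 by (simp add: t_def)
      have ty: "t powr (1-m) = y"
      proof -
        have "t powr (1-m) = y powr ((-1/(m-1)) * (1-m))" unfolding t_def by (simp add: powr_powr)
        also have "(-1/(m-1)) * (1-m) = 1" using m by (simp add: field_simps)
        finally show ?thesis using y1 by simp
      qed
      have t1: "t \<le> 1" unfolding t_def using powr_mono[of "-1/(m-1)" 0 y] y1 m by simp
      define Xt where "Xt i = t * Xs i" for i
      have Xt: "Xt \<in> Rp p" unfolding Xt_def by (rule Rp_scale[OF t0 Xs])
      have Fe: "Fp m \<chi> \<alpha> p Xt = y * a / (m-1) - \<chi> / (m-1) * (y * (M * a)) + \<alpha> * (t^2 * Q) / 2"
        unfolding Fp_def Xt_def adj_scale[OF t0 Xs] pair_scale[OF t0] ty q Q_def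
        by (simp add: power_mult_distrib sum_distrib_left a_def)
      also have "\<dots> = - (y * K) + \<alpha> * (t^2 * Q) / 2"
      proof -
        have "y * a / (m-1) - \<chi> / (m-1) * (y * (M * a)) = (y * a - \<chi> * (y * (M * a))) / (m-1)"
          by (simp add: diff_divide_distrib)
        also have "y * a - \<chi> * (y * (M * a)) = - (y * (\<chi> * (M * a) - a))"
          by (simp add: algebra_simps)
        also have "- (y * (\<chi> * (M * a) - a)) / (m-1) = - (y * K)"
          unfolding K_def by simp
        finally show ?thesis by simp
      qed
      also have "\<dots> \<le> - (y * K) + \<alpha> * Q / 2"
      proof -
        have "t^2 \<le> 1" using t0 t1 by (simp add: power_le_one)
        moreover have "Q \<ge> 0" unfolding Q_def by (simp add: sum_nonneg)
        ultimately have "t^2 * Q \<le> Q" by (simp add: mult_left_le_one_le)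
        then show ?thesis using al by (simp add: mult_left_mono divide_right_mono)
      qed
      finally have "Fp m \<chi> \<alpha> p Xt < B" using yK by linarith
      then show False using B[OF Xt] by simp
    qed
  next
    assume "\<chi> \<le> Cp m p"
    then have cM: "\<chi> * M \<le> 1" using M0 by (simp add: Cp field_simps)
    show "bdd_below (Fp m \<chi> \<alpha> p ` Rp p)"
    proof (rule bdd_belowI[of _ 0])
      fix x assume "x \<in> Fp m \<chi> \<alpha> p ` Rp p"
      then obtain Y where Y: "Y \<in> Rp p" and x: "x = Fp m \<chi> \<alpha> p Y" by auto
      define a where "a = adj_sum m p Y"
      have a0: "a > 0" unfolding a_def using SS_pos[OF Y p, of m] adj_SS by simp
      have "ratio m p Y \<le> M" unfolding M_def by (rule mx[OF Y])
      then have "pair_sum m p Y \<le> M * a" using a0 unfolding ratio_def a_def by (simp add: divide_simps)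
      then have "\<chi> * pair_sum m p Y \<le> \<chi> * M * a" using chi by (simp add: mult_left_mono mult.assoc)
      also have "\<dots> \<le> a" using cM a0 by (simp add: mult_right_le_one_le)
      finally have "0 \<le> (a - \<chi> * pair_sum m p Y) / (m - 1)" using m by simp
      moreover have "0 \<le> \<alpha> * (\<Sum>i=1..p. (Y i)^2) / 2" using al by (simp add: sum_nonneg)
      ultimately show "0 \<le> x" unfolding x Fp_def a_def by (simp add: diff_divide_distrib)
    qed
  qed
  show ?thesis
  proof (intro conjI allI impI)
    show "\<exists>X\<in>Rp p. \<forall>Y\<in>Rp p. ratio m p Y \<le> ratio m p X" using Xs mx by blast
    show "1 / Cp m p \<le> real p" using Cp Mp by simp
  qed (simp add: part3)
qed

end
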